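(* Let $d=2$, write $z=(z_1,z_2)$, and for $r\ge2$ let $D_r=\{z\in\mathbb{R}^2:z_1\ge0,\ 2\le|z|\le r\}$. There exists a constant $c>0$ such that for all Borel $U:\mathbb{R}^2\to[0,\infty]$ and all $r\ge2$, $$\int_{D_r}K(1,z,(r,0))\,U(z)\,dz\le c\sup_{w\in\mathbb{R}^2}\int_{|z|\le2}U(z+w)\,dz,$$ where $K(1,z,(r,0))=e^{-\frac12 r(|z|-z_1)}\log\big(1+(r|z|)^{-1/2}\big)\mathbf 1_{|z|\le r}$. *)

theory Defs
  imports "HOL-Analysis.Analysis"
begin

definition D_region :: "real \<Rightarrow> (real^2) set" where
  "D_region r = {z. z$1 \<ge> 0 \<and> 2 \<le> norm z \<and> norm z \<le> r}"

definition K1 :: "real \<Rightarrow> real^2 \<Rightarrow> real" where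
  "K1 r z = exp (- (1/2) * r * (norm z - z$1)) * ln (1 + (r * norm z) powr (-1/2))
            * indicator {y. norm y \<le> r} z"

end

theory Submission
  imports Defs
begin


lemma norm2_sq: "(norm (z::real^2))^2 = (z$1)^2 + (z$2)^2"
  by (simp add: norm_eq_sqrt_inner inner_vec_def sum_2 power2_eq_square)

lemma shift_ball:
  fixes U :: "real^2 \<Rightarrow> ennreal" and c :: "real^2"
  assumes U: "U \<in> borel_measurable borel"
  shows "(\<integral>\<^sup>+ z. U z * indicator (cball c 2) z \<partial>lborel) = (\<integral>\<^sup>+ z\<in>cball 0 2. U (z + c) \<partial>lborel)"
proof -
  have [measurable]: "cball c 2 \<in> sets borel" by simp
  have "(\<integral>\<^sup>+ z. U z * indicator (cball c 2) z \<partial>lborel)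
      = (\<integral>\<^sup>+ z. U z * indicator (cball c 2) z \<partial>(distr lborel borel ((+) c)))"
    by (simp add: lborel_distr_plus)
  also have "\<dots> = (\<integral>\<^sup>+ z. U (c + z) * indicator (cball c 2) (c + z) \<partial>lborel)"
    by (rule nn_integral_distr) (use U in measurable)
  also have "\<dots> = (\<integral>\<^sup>+ z\<in>cball 0 2. U (z + c) \<partial>lborel)"
    by (intro nn_integral_cong) (auto simp: indicator_def dist_norm add.commute)
  finally show ?thesis .
qed

lemma box_bound:
  fixes U :: "real^2 \<Rightarrow> ennreal" and a b :: real
  assumes U: "U \<in> borel_measurable borel"
  shows "(\<integral>\<^sup>+ z. U z * indicator {z. a \<le> z$1 \<and> z$1 \<le> a+1 \<and> b \<le> z$2 \<and> z$2 \<le> b+1} z \<partial>lborel)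
     \<le> (SUP w. \<integral>\<^sup>+ z\<in>cball 0 2. U (z + w) \<partial>lborel)"
proof -
  define c :: "real^2" where "c = vector [a + 1/2, b + 1/2]"
  have sub: "{z. a \<le> z$1 \<and> z$1 \<le> a+1 \<and> b \<le> z$2 \<and> z$2 \<le> b+1} \<subseteq> cball c 2"
  proof
    fix z :: "real^2" assume z: "z \<in> {z. a \<le> z$1 \<and> z$1 \<le> a+1 \<and> b \<le> z$2 \<and> z$2 \<le> b+1}"
    have "norm (c - z) \<le> \<bar>(c - z)$1\<bar> + \<bar>(c-z)$2\<bar>"
      using norm_le_l1_cart[of "c - z"] by (simp add: sum_2)
    also have "\<dots> \<le> 2" using z by (simp add: c_def abs_le_iff) linarith
    finally show "z \<in> cball c 2" by (simp add: dist_norm)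
  qed
  have "(\<integral>\<^sup>+ z. U z * indicator {z. a \<le> z$1 \<and> z$1 \<le> a+1 \<and> b \<le> z$2 \<and> z$2 \<le> b+1} z \<partial>lborel)
      \<le> (\<integral>\<^sup>+ z. U z * indicator (cball c 2) z \<partial>lborel)"
    by (intro nn_integral_mono) (use sub in \<open>auto simp: indicator_def\<close>)
  also have "\<dots> = (\<integral>\<^sup>+ z\<in>cball 0 2. U (z + c) \<partial>lborel)" by (rule shift_ball[OF U])
  also have "\<dots> \<le> (SUP w. \<integral>\<^sup>+ z\<in>cball 0 2. U (z + w) \<partial>lborel)" by (rule SUP_upper) auto
  finally show ?thesis .
qed




lemma sqrt_sum_bound: "(\<Sum>m\<in>{1..N}. 1 / sqrt (real m)) \<le> 2 * sqrt (real N)"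
proof (induction N)
  case 0 then show ?case by simp
next
  case (Suc N)
  have key: "1 / sqrt (real (Suc N)) \<le> 2 * sqrt (real (Suc N)) - 2 * sqrt (real N)"
  proof -
    define s1 where "s1 = sqrt (real (Suc N))"
    define s0 where "s0 = sqrt (real N)"
    have p: "s1 > 0" "s0 \<ge> 0" by (auto simp: s1_def s0_def)
    have sq: "s1^2 = real N + 1" "s0^2 = real N" by (auto simp: s1_def s0_def)
    have "s0 * s1 \<le> real N + 1/2"
    proof -
      have "(s0 * s1)^2 = real N * (real N + 1)" by (simp add: power_mult_distrib sq)
      then have "(s0 * s1)^2 \<le> (real N + 1/2)^2" by (simp add: algebra_simps power2_eq_square)
      then show ?thesis by (rule power2_le_imp_le) simp
    qed
    then have "1 \<le> (2 * s1 - 2 * s0) * s1" using sq by (simp add: algebra_simps power2_eq_square)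
    then have "1 / s1 \<le> 2 * s1 - 2 * s0" using p(1) by (subst divide_le_eq) (auto simp: algebra_simps)
    then show ?thesis unfolding s1_def s0_def .
  qed
  have "(\<Sum>m\<in>{1..Suc N}. 1 / sqrt (real m)) = (\<Sum>m\<in>{1..N}. 1 / sqrt (real m)) + 1 / sqrt (real (Suc N))"
    by simp
  also have "\<dots> \<le> 2 * sqrt (real (Suc N))" using Suc key by linarith
  finally show ?case .
qed

lemma weight_sum:
  fixes r :: real assumes r: "r \<ge> 2"
  shows "(\<Sum>m\<le>nat \<lfloor>r\<rfloor>. 1 / sqrt (r * max (real m) 1)) \<le> 3"
proof -
  define N where "N = nat \<lfloor>r\<rfloor>"
  have N: "real N \<le> r" using r by (simp add: N_def)
  have eq: "(\<Sum>m\<le>N. 1 / sqrt (r * max (real m) 1)) = (1 / sqrt r) * (\<Sum>m\<le>N. 1 / sqrt (max (real m) 1))"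
    by (simp add: sum_distrib_left real_sqrt_mult)
  have "{..N} = insert 0 {1..N}" by auto
  then have "(\<Sum>m\<le>N. 1 / sqrt (max (real m) 1)) = 1 + (\<Sum>m\<in>{1..N}. 1 / sqrt (max (real m) 1))"
    by simp
  also have "(\<Sum>m\<in>{1..N}. 1 / sqrt (max (real m) 1)) = (\<Sum>m\<in>{1..N}. 1 / sqrt (real m))"
    by (intro sum.cong) auto
  finally have "(\<Sum>m\<le>N. 1 / sqrt (max (real m) 1)) \<le> 1 + 2 * sqrt r"
    using sqrt_sum_bound[of N] real_sqrt_le_mono[OF N] by linarith
  then have "(\<Sum>m\<le>N. 1 / sqrt (r * max (real m) 1)) \<le> (1 / sqrt r) * (1 + 2 * sqrt r)"
    unfolding eq using r by (intro mult_left_mono) auto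
  also have "\<dots> = 1 / sqrt r + 2" using r by (simp add: field_simps)
  also have "\<dots> \<le> 3"
  proof -
    have "1 \<le> sqrt r" using r by simp
    then have "1 / sqrt r \<le> 1" by simp
    then show ?thesis by simp
  qed
  finally show ?thesis unfolding N_def .
qed

lemma pointwise:
  fixes r :: real and z :: "real^2"
  assumes r: "r \<ge> 2" and z: "z \<in> D_region r"
  shows "K1 r z \<le> 1 / sqrt (r * max (real (nat \<lfloor>z$1\<rfloor>)) 1) * exp (-1/4) ^ (nat \<lfloor>\<bar>z$2\<bar>\<rfloor>)"
proof -
  define x where "x = z$1"
  define y where "y = z$2"
  define n where "n = norm z"
  define m where "m = nat \<lfloor>x\<rfloor>"
  define k where "k = nat \<lfloor>\<bar>y\<bar>\<rfloor>"
  have x0: "x \<ge> 0" and n2: "2 \<le> n" and nr: "n \<le> r" using z by (auto simp: D_region_def x_def n_def)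
  have sq: "n^2 = x^2 + y^2" using norm2_sq[of z] by (simp add: n_def x_def y_def)
  have xn: "x \<le> n"
  proof -
    have "x^2 \<le> n^2" using sq by simp
    then show ?thesis using n2 power2_le_imp_le[of x n] by simp
  qed
  have prod: "(n - x) * (n + x) = y^2" using sq by (simp add: algebra_simps power2_eq_square)
  have "y^2 \<le> (n - x) * (2 * r)"
    unfolding prod[symmetric] using xn nr x0 by (intro mult_left_mono) auto
  have kk: "real k \<le> y^2"
  proof -
    have "real k \<le> \<bar>y\<bar>" unfolding k_def by simp
    have "real k \<le> real k ^ 2" by (cases k) (auto simp: power2_eq_square)
    also have "\<dots> \<le> \<bar>y\<bar>^2" using \<open>real k \<le> \<bar>y\<bar>\<close> by (intro power_mono) auto
    finally show ?thesis by simp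
  qed
  have e1: "exp (- (1/2) * r * (n - x)) \<le> exp (-1/4) ^ k"
  proof -
    have "- (1/2) * r * (n - x) \<le> real k * (-1/4)"
      using \<open>y^2 \<le> (n - x) * (2 * r)\<close> kk by (simp add: algebra_simps)
    then have "exp (- (1/2) * r * (n - x)) \<le> exp (real k * (-1/4))" by simp
    then show ?thesis by (metis exp_of_nat_mult)
  qed
  have mxx: "real m \<le> x" unfolding m_def using x0 by linarith
  have mx: "max (real m) 1 \<le> n" using xn n2 mxx by auto
  have e2: "ln (1 + (r * n) powr (-1/2)) \<le> 1 / sqrt (r * max (real m) 1)"
  proof -
    have pos: "r * n > 0" using r n2 by simp
    have "ln (1 + (r * n) powr (-1/2)) \<le> (r * n) powr (-1/2)"
      by (rule ln_add_one_self_le_self) simp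
    also have "(r * n) powr (-1/2) = 1 / sqrt (r * n)"
      using pos by (simp add: powr_minus_divide powr_half_sqrt)
    also have "\<dots> \<le> 1 / sqrt (r * max (real m) 1)"
      using mx r by (intro divide_left_mono real_sqrt_le_mono mult_left_mono mult_pos_pos) auto
    finally show ?thesis .
  qed
  have ind: "indicator {y. norm y \<le> r} z = (1::real)" using nr by (simp add: n_def)
  have "K1 r z = exp (- (1/2) * r * (n - x)) * ln (1 + (r * n) powr (-1/2))"
    unfolding K1_def ind by (simp add: n_def x_def)
  also have "\<dots> \<le> exp (-1/4) ^ k * (1 / sqrt (r * max (real m) 1))"
    using e1 e2 r n2 by (intro mult_mono) auto
  finally show ?thesis by (simp add: m_def k_def x_def y_def mult.commute)
qed


lemma term_le_suminf: "f k \<le> (\<Sum>i. f i :: ennreal)"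
proof -
  have "sum f {k} \<le> suminf f" by (rule sum_le_suminf) auto
  then show ?thesis by simp
qed

theorem lemma4p4:
  shows "\<exists>c::real. c > 0 \<and>
    (\<forall>(U :: real^2 \<Rightarrow> ennreal) (r::real). U \<in> borel_measurable borel \<longrightarrow> r \<ge> 2 \<longrightarrow>
       (\<integral>\<^sup>+ z\<in>D_region r. ennreal (K1 r z) * U z \<partial>lborel)
         \<le> ennreal c * (SUP w. \<integral>\<^sup>+ z\<in>cball 0 2. U (z + w) \<partial>lborel))"
proof -
  define q :: real where "q = exp (-1/4)"
  have q0: "0 < q" and q1: "q < 1" by (auto simp: q_def)
  define c where "c = 6 / (1 - q)"
  show ?thesis
  proof (intro exI[of _ c] conjI allI impI)
    show "c > 0" using q1 by (simp add: c_def)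
    fix U :: "real^2 \<Rightarrow> ennreal" and r :: real
    assume U: "U \<in> borel_measurable borel" and r: "r \<ge> 2"
    define S where "S = (SUP w. \<integral>\<^sup>+ z\<in>cball 0 2. U (z + w) \<partial>lborel)"
    define N where "N = nat \<lfloor>r\<rfloor>"
    define a where "a m = 1 / sqrt (r * max (real m) 1)" for m :: nat
    define C where "C m k = {z::real^2. real m \<le> z$1 \<and> z$1 < real m + 1 \<and> real k \<le> \<bar>z$2\<bar> \<and> \<bar>z$2\<bar> < real k + 1}" for m k :: nat
    have a0: "a m \<ge> 0" for m using r by (simp add: a_def)
    have Cmeas[measurable]: "C m k \<in> sets borel" for m k unfolding C_def by measurable
    have cell: "(\<integral>\<^sup>+ z. U z * indicator (C m k) z \<partial>lborel) \<le> 2 * S" for m k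
    proof -
      let ?B1 = "{z::real^2. real m \<le> z$1 \<and> z$1 \<le> real m+1 \<and> real k \<le> z$2 \<and> z$2 \<le> real k+1}"
      let ?B2 = "{z::real^2. real m \<le> z$1 \<and> z$1 \<le> real m+1 \<and> (-real k - 1) \<le> z$2 \<and> z$2 \<le> (-real k - 1)+1}"
      have [measurable]: "?B1 \<in> sets borel" by measurable
      have [measurable]: "?B2 \<in> sets borel" by measurable
      have "(\<integral>\<^sup>+ z. U z * indicator (C m k) z \<partial>lborel)
          \<le> (\<integral>\<^sup>+ z. U z * indicator ?B1 z + U z * indicator ?B2 z \<partial>lborel)"
      proof (intro nn_integral_mono)
        fix z :: "real^2"
        show "U z * indicator (C m k) z \<le> U z * indicator ?B1 z + U z * indicator ?B2 z"
        proof (cases "z \<in> C m k")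
          case True
          then have "z \<in> ?B1 \<or> z \<in> ?B2" unfolding C_def by (cases "z$2 \<ge> 0") auto
          then show ?thesis using True by (auto simp: indicator_def)
        qed (simp)
      qed
      also have "\<dots> = (\<integral>\<^sup>+ z. U z * indicator ?B1 z \<partial>lborel) + (\<integral>\<^sup>+ z. U z * indicator ?B2 z \<partial>lborel)"
        by (rule nn_integral_add; use U in measurable)
      also have "\<dots> \<le> S + S"
        using box_bound[OF U, of "real m" "real k"] box_bound[OF U, of "real m" "-real k - 1"]
        by (intro add_mono) (simp_all add: S_def)
      finally show ?thesis by (simp add: mult_2)
    qed
    have pw: "ennreal (K1 r z) * U z * indicator (D_region r) z
        \<le> (\<Sum>m\<le>N. \<Sum>k. ennreal (a m * q^k) * (U z * indicator (C m k) z))" for z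
    proof (cases "z \<in> D_region r")
      case False then show ?thesis by simp
    next
      case True
      define m where "m = nat \<lfloor>z$1\<rfloor>"
      define k where "k = nat \<lfloor>\<bar>z$2\<bar>\<rfloor>"
      have x0: "z$1 \<ge> 0" and nr: "norm z \<le> r" using True by (auto simp: D_region_def)
      have "z$1 \<le> norm z" using component_le_norm_cart[of z 1] by simp
      then have mN: "m \<le> N" unfolding m_def N_def using nr x0 by (intro nat_mono floor_mono) linarith
      have zC: "z \<in> C m k" unfolding C_def m_def k_def using x0 by auto
      have "ennreal (K1 r z) * U z * indicator (D_region r) z = ennreal (K1 r z) * U z"
        using True by simp
      also have "\<dots> \<le> ennreal (a m * q^k) * U z"
        using pointwise[OF r True] by (intro mult_right_mono ennreal_leI) (simp_all add: a_def q_def m_def k_def)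
      also have "\<dots> = ennreal (a m * q^k) * (U z * indicator (C m k) z)" using zC by simp
      also have "\<dots> \<le> (\<Sum>k. ennreal (a m * q^k) * (U z * indicator (C m k) z))"
        by (rule term_le_suminf)
      also have "\<dots> \<le> (\<Sum>m\<le>N. \<Sum>k. ennreal (a m * q^k) * (U z * indicator (C m k) z))"
        by (rule member_le_sum) (use mN in auto)
      finally show ?thesis .
    qed
    have geo: "(\<Sum>k. ennreal (a m * q^k)) = ennreal (a m / (1 - q))" for m
    proof -
      have s: "summable (\<lambda>k. a m * q^k)" using q0 q1 by (intro summable_mult summable_geometric) simp
      have "(\<Sum>k. ennreal (a m * q^k)) = ennreal (\<Sum>k. a m * q^k)"
        by (rule suminf_ennreal2) (use a0 q0 s in auto)
      also have "(\<Sum>k. a m * q^k) = a m * (\<Sum>k. q^k)" using q0 q1 by (intro suminf_mult summable_geometric) simp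
      also have "\<dots> = a m / (1 - q)" using q0 q1 by (simp add: suminf_geometric)
      finally show ?thesis .
    qed
    have "(\<integral>\<^sup>+ z\<in>D_region r. ennreal (K1 r z) * U z \<partial>lborel)
        \<le> (\<integral>\<^sup>+ z. (\<Sum>m\<le>N. \<Sum>k. ennreal (a m * q^k) * (U z * indicator (C m k) z)) \<partial>lborel)"
      by (rule nn_integral_mono) (rule pw)
    also have "\<dots> = (\<Sum>m\<le>N. \<integral>\<^sup>+ z. (\<Sum>k. ennreal (a m * q^k) * (U z * indicator (C m k) z)) \<partial>lborel)"
      by (rule nn_integral_sum) (use U in measurable)
    also have "\<dots> = (\<Sum>m\<le>N. \<Sum>k. \<integral>\<^sup>+ z. ennreal (a m * q^k) * (U z * indicator (C m k) z) \<partial>lborel)"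
      by (intro sum.cong refl nn_integral_suminf) (use U in measurable)
    also have "\<dots> = (\<Sum>m\<le>N. \<Sum>k. ennreal (a m * q^k) * (\<integral>\<^sup>+ z. U z * indicator (C m k) z \<partial>lborel))"
      by (intro sum.cong refl suminf_cong nn_integral_cmult) (use U in measurable)
    also have "\<dots> \<le> (\<Sum>m\<le>N. \<Sum>k. ennreal (a m * q^k) * (2 * S))"
      by (intro sum_mono suminf_le mult_left_mono cell summableI) auto
    also have "\<dots> = (\<Sum>m\<le>N. ennreal (a m / (1 - q)) * (2 * S))"
      by (simp add: geo)
    also have "\<dots> = ennreal (\<Sum>m\<le>N. a m / (1 - q)) * (2 * S)"
      using a0 q1 by (simp add: sum_distrib_right[symmetric])
    also have "\<dots> \<le> ennreal (3 / (1 - q)) * (2 * S)"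
    proof -
      have "(\<Sum>m\<le>N. a m / (1 - q)) = (\<Sum>m\<le>N. a m) / (1 - q)" by (simp add: sum_divide_distrib)
      also have "\<dots> \<le> 3 / (1 - q)" using weight_sum[OF r] q1
        by (intro divide_right_mono) (simp_all add: a_def N_def)
      finally show ?thesis by (intro mult_right_mono ennreal_leI) auto
    qed
    also have "\<dots> = ennreal c * S"
    proof -
      have "ennreal (3 / (1 - q)) * 2 = ennreal c"
        proof -
        have "ennreal (3 / (1 - q)) * 2 = ennreal (3 / (1 - q) * 2)" by (subst ennreal_mult'') simp_all
        then show ?thesis by (simp add: c_def)
      qed
      then show ?thesis by (metis mult.assoc mult.commute)
    qed
    finally show "(\<integral>\<^sup>+ z\<in>D_region r. ennreal (K1 r z) * U z \<partial>lborel) \<le> ennreal c * (SUP w. \<integral>\<^sup>+ z\<in>cball 0 2. U (z + w) \<partial>lborel)"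
      unfolding S_def .
  qed
qed

end
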